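(* Let $q$ be a prime power and $n\ge0$. Let $s_A(n,q)$, $c_A(n,q)$, $ss_A(n,q)$ be the proportions of separable, cyclic, and semisimple elements of $A(n,q)$, respectively. Then \[ s_A(n,q)\le ss_A(n,q)\le s_A(n,q)+(1-c_A(n,q)). \]
   Context: $A(n,q)$ is the group of matrices $x\in GL(n+1,q)$ with $x_{11}=1$ and $x_{j1}=0$ for $j\ge2$, viewed in $GL(n+1,q)$. A matrix is separable if its characteristic polynomial is square-free, cyclic if its minimal polynomial equals its characteristic polynomial, and semisimple if it is diagonalizable over the algebraic closure of $\mathbb{F}_q$. *)

theory Defs
  imports "Jordan_Normal_Form.Jordan_Normal_Form" "HOL-Algebra.Algebraic_Closure_Type"
    "HOL-Computational_Algebra.Squarefree"
begin

definition poly_mat_eval :: "'a::comm_ring_1 poly \<Rightarrow> 'a mat \<Rightarrow> 'a mat" where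
  "poly_mat_eval p M = mat (dim_row M) (dim_col M)
     (\<lambda>(i,j). \<Sum>k\<le>Polynomial.degree p. Polynomial.coeff p k * (M ^\<^sub>m k) $$ (i,j))"

definition minimal_poly :: "'a::field mat \<Rightarrow> 'a poly" where
  "minimal_poly M = (THE p. monic p \<and> poly_mat_eval p M = 0\<^sub>m (dim_row M) (dim_col M) \<and>
      (\<forall>r. r \<noteq> 0 \<longrightarrow> poly_mat_eval r M = 0\<^sub>m (dim_row M) (dim_col M) \<longrightarrow> Polynomial.degree p \<le> Polynomial.degree r))"

definition separable_mat :: "'a::field mat \<Rightarrow> bool" where
  "separable_mat M \<longleftrightarrow> squarefree (char_poly M)"

definition cyclic_mat :: "'a::field mat \<Rightarrow> bool" where
  "cyclic_mat M \<longleftrightarrow> minimal_poly M = char_poly M"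

definition semisimple_mat :: "'a::field mat \<Rightarrow> bool" where
  "semisimple_mat M \<longleftrightarrow> (\<exists>D. diagonal_mat D \<and> similar_mat (map_mat to_ac M) D)"

(* A(n,q) inside GL(n+1,q), indices 0-based: x_{00} = 1 and x_{j0} = 0 for j \<ge> 1 *)
definition A_group :: "nat \<Rightarrow> 'a::field mat set" where
  "A_group n = {x \<in> carrier_mat (n+1) (n+1). invertible_mat x \<and> x $$ (0,0) = 1 \<and>
      (\<forall>j. 1 \<le> j \<and> j \<le> n \<longrightarrow> x $$ (j,0) = 0)}"

definition proportion :: "'a set \<Rightarrow> ('a \<Rightarrow> bool) \<Rightarrow> real" where
  "proportion S P = real (card {x \<in> S. P x}) / real (card S)"

end

theory Submission
  imports Defs
begin


lemma poly_bezout_gen: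
  fixes a b :: "'a::field poly"
  shows "\<exists>u v. (u*a + v*b) dvd a \<and> (u*a + v*b) dvd b"
proof (induction "euclidean_size b" arbitrary: a b rule: less_induct)
  case less
  show ?case
  proof (cases "b = 0")
    case True
    then show ?thesis by (intro exI[of _ 1] exI[of _ 0]) auto
  next
    case False
    then have "euclidean_size (a mod b) < euclidean_size b" by (rule mod_size_less)
    from less[OF this] obtain u v where uv: "(u*b + v*(a mod b)) dvd b" "(u*b + v*(a mod b)) dvd (a mod b)"
      by blast
    have amod: "a mod b = a - (a div b) * b" by (simp add: minus_div_mult_eq_mod)
    have eq: "u*b + v*(a mod b) = v*a + (u - v*(a div b))*b"
      unfolding amod by (simp add: algebra_simps)
    have "(u*b + v*(a mod b)) dvd a"
    proof -
      have "a = (a div b) * b + a mod b" by simp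
      with uv show ?thesis by (metis dvd_add dvd_mult)
    qed
    with uv show ?thesis unfolding eq by blast
  qed
qed

lemma poly_coprime_bezout:
  fixes a b :: "'a::field poly"
  assumes "\<And>d. d dvd a \<Longrightarrow> d dvd b \<Longrightarrow> is_unit d"
  shows "\<exists>u v. u*a + v*b = 1"
proof -
  obtain u v where uv: "(u*a + v*b) dvd a" "(u*a + v*b) dvd b" using poly_bezout_gen by blast
  then have "is_unit (u*a + v*b)" using assms by blast
  then obtain e where e: "1 = (u*a + v*b) * e" by (elim dvdE)
  have "(e*u)*a + (e*v)*b = 1" using e by (simp add: algebra_simps)
  then show ?thesis by blast
qed

lemma poly_irreducible_factor:
  fixes p :: "'a::field poly"
  assumes "p \<noteq> 0" "\<not> is_unit p"
  shows "\<exists>g. Factorial_Ring.irreducible g \<and> g dvd p"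
  using assms
proof (induction "Polynomial.degree p" arbitrary: p rule: less_induct)
  case less
  show ?case
  proof (cases "Factorial_Ring.irreducible p")
    case True then show ?thesis by (intro exI[of _ p]) auto
  next
    case False
    with less.prems obtain a b where ab: "p = a*b" "\<not> is_unit a" "\<not> is_unit b"
      unfolding Factorial_Ring.irreducible_def by blast
    then have a0: "a \<noteq> 0" and b0: "b \<noteq> 0" using less.prems by auto
    have "Polynomial.degree b > 0" using ab(3) b0 is_unit_iff_degree by blast
    then have "Polynomial.degree a < Polynomial.degree p"
      using ab(1) a0 b0 by (simp add: degree_mult_eq)
    from less.hyps[OF this a0 ab(2)] obtain g where "Factorial_Ring.irreducible g" "g dvd a" by blast
    then show ?thesis using ab(1) by auto
  qed
qed

lemma poly_irreducible_prime:
  fixes g :: "'a::field poly"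
  assumes irr: "Factorial_Ring.irreducible g" and d: "g dvd x * y" and nx: "\<not> g dvd x"
  shows "g dvd y"
proof -
  have "\<exists>u v. u*g + v*x = 1"
  proof (rule poly_coprime_bezout)
    fix d assume dg: "d dvd g" and dx: "d dvd x"
    then obtain e where e: "g = d * e" by (elim dvdE)
    then have "is_unit d \<or> is_unit e" using irr unfolding Factorial_Ring.irreducible_def by blast
    then show "is_unit d"
    proof
      assume "is_unit e"
      then have "g dvd d" using e by (metis dvd_mult_unit_iff dvd_refl)
      then have "g dvd x" using dx by (rule dvd_trans)
      with nx show ?thesis by blast
    qed
  qed
  then obtain u v where uv: "u*g + v*x = 1" by blast
  have "y = u*g*y + v*(x*y)" using uv by (metis mult.assoc mult_1 distrib_right)
  moreover have "g dvd u*g*y + v*(x*y)" using d by simp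
  ultimately show ?thesis by simp
qed

lemma finite_field_CHAR_prime: "normalization_semidom_class.prime CHAR('a::{finite,field})"
  by (rule prime_CHAR_semidom) (rule finite_imp_CHAR_pos, simp)

lemma frob_surj:
  fixes c :: "'a::{finite,field}"
  shows "\<exists>r. r ^ CHAR('a) = c"
proof -
  let ?p = "CHAR('a)"
  have pr: "normalization_semidom_class.prime ?p" by (rule finite_field_CHAR_prime)
  have "inj (\<lambda>x::'a. x ^ ?p)"
  proof (rule injI)
    fix x y :: 'a assume "x ^ ?p = y ^ ?p"
    moreover have "(x + (-y)) ^ ?p = x ^ ?p + (-y) ^ ?p"
      by (rule freshmans_dream[OF pr refl])
    moreover have "(-y) ^ ?p = - (y ^ ?p)" by (rule minus_power_prime_CHAR[OF refl pr])
    ultimately have "(x - y) ^ ?p = 0" by simp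
    then show "x = y" by simp
  qed
  then have "surj (\<lambda>x::'a. x ^ ?p)" by (intro finite_UNIV_inj_surj) auto
  then show ?thesis by (metis surjD)
qed

lemma irreducible_pderiv_nz:
  fixes g :: "'a::{finite,field} poly"
  assumes irr: "Factorial_Ring.irreducible g"
  shows "pderiv g \<noteq> 0"
proof
  assume pd: "pderiv g = 0"
  let ?p = "CHAR('a)"
  have pr: "normalization_semidom_class.prime ?p" by (rule finite_field_CHAR_prime)
  have p2: "?p \<ge> 2" using pr prime_ge_2_nat by blast
  obtain r :: "'a \<Rightarrow> 'a" where r: "\<And>c. r c ^ ?p = c" using frob_surj by metis
  define u where "u = (\<Sum>i\<le>Polynomial.degree g. Polynomial.monom (r (poly.coeff g (?p*i))) i)"
  have cz: "poly.coeff g k = 0" if "\<not> ?p dvd k" for k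
  proof -
    have "k \<noteq> 0" using that by (metis dvd_0_right)
    then obtain k' where k: "k = Suc k'" by (cases k) auto
    have "of_nat (Suc k') * poly.coeff g (Suc k') = (0::'a)"
      using pd coeff_pderiv[of g k'] by simp
    moreover have "of_nat (Suc k') \<noteq> (0::'a)" using that k of_nat_eq_0_iff_char_dvd by metis
    ultimately show ?thesis using k by simp
  qed
  have "u ^ ?p = (\<Sum>i\<le>Polynomial.degree g. Polynomial.monom (r (poly.coeff g (?p*i))) i ^ ?p)"
    unfolding u_def by (rule freshmans_dream_sum) (simp_all add: pr)
  also have "\<dots> = (\<Sum>i\<le>Polynomial.degree g. Polynomial.monom (poly.coeff g (?p*i)) (?p*i))"
    by (simp add: monom_power r mult.commute)
  also have "\<dots> = g"
  proof (rule poly_eqI)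
    fix k
    have "poly.coeff (\<Sum>i\<le>Polynomial.degree g. Polynomial.monom (poly.coeff g (?p*i)) (?p*i)) k
        = (\<Sum>i\<le>Polynomial.degree g. if ?p*i = k then poly.coeff g k else 0)"
      by (simp add: coeff_sum coeff_monom) (intro sum.cong, auto)
    also have "\<dots> = poly.coeff g k"
    proof (cases "?p dvd k")
      case True
      then obtain i0 where k: "k = ?p * i0" by (elim dvdE)
      have inj: "?p * i = k \<longleftrightarrow> i = i0" for i using k p2 by auto
      show ?thesis
      proof (cases "i0 \<le> Polynomial.degree g")
        case True
        then show ?thesis unfolding inj by (simp add: sum.delta)
      next
        case False
        have "k \<ge> i0" using k p2 by simp
        then have "k > Polynomial.degree g" using False by linarith
        then have "poly.coeff g k = 0" by (simp add: coeff_eq_0)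
        then show ?thesis unfolding inj using False by (simp add: sum.delta)
      qed
    next
      case False
      then have "?p * i \<noteq> k" for i by auto
      then show ?thesis using cz[OF False] by simp
    qed
    finally show "poly.coeff (\<Sum>i\<le>Polynomial.degree g. Polynomial.monom (poly.coeff g (?p*i)) (?p*i)) k = poly.coeff g k" .
  qed
  finally have ug: "u ^ ?p = g" .
  have "g = u * u ^ (?p - 1)" using ug p2 by (metis power_eq_if not_numeral_le_zero)
  then have "is_unit u \<or> is_unit (u ^ (?p - 1))" using irr unfolding Factorial_Ring.irreducible_def by blast
  moreover have "?p - 1 \<noteq> 0" using p2 by simp
  ultimately have "is_unit u" using is_unit_power_iff[of u "?p - 1"] by argo
  then have "is_unit (u ^ ?p)" using is_unit_power_iff[of u ?p] by argo
  then have "is_unit g" using ug by simp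
  then show False using irr unfolding Factorial_Ring.irreducible_def by blast
qed

lemma sqf_bezout:
  fixes f :: "'a::{finite,field} poly"
  assumes sf: "squarefree f" and f0: "f \<noteq> 0"
  shows "\<exists>u v. u*f + v*pderiv f = 1"
proof (rule poly_coprime_bezout)
  fix d assume df: "d dvd f" and dd: "d dvd pderiv f"
  show "is_unit d"
  proof (rule ccontr)
    assume nu: "\<not> is_unit d"
    have d0: "d \<noteq> 0" using df f0 by auto
    obtain g where irr: "Factorial_Ring.irreducible g" and gd: "g dvd d"
      using poly_irreducible_factor[OF d0 nu] by blast
    have g0: "g \<noteq> 0" and gnu: "\<not> is_unit g" using irr unfolding Factorial_Ring.irreducible_def by auto
    have gf: "g dvd f" and gf': "g dvd pderiv f" using gd df dd dvd_trans by blast+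
    then obtain k where k: "f = g * k" by (elim dvdE)
    have "pderiv f = g * pderiv k + k * pderiv g" unfolding k by (rule pderiv_mult)
    with gf' have "g dvd k * pderiv g" by (metis dvd_add_right_iff dvd_triv_left)
    then have "g dvd k \<or> g dvd pderiv g" using poly_irreducible_prime[OF irr] by blast
    then show False
    proof
      assume "g dvd k"
      then have "g^2 dvd f" unfolding k power2_eq_square by simp
      then show False using sf gnu unfolding squarefree_def by blast
    next
      assume a: "g dvd pderiv g"
      have pz: "pderiv g \<noteq> 0" by (rule irreducible_pderiv_nz[OF irr])
      have "Polynomial.degree g > 0" using g0 gnu is_unit_iff_degree by blast
      moreover have "Polynomial.degree g \<le> Polynomial.degree (pderiv g)" using dvd_imp_degree_le[OF a pz] .
      moreover have "Polynomial.degree (pderiv g) \<le> Polynomial.degree g - 1" by (rule degree_pderiv_le)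
      ultimately show False by linarith
    qed
  qed
qed

lemma pme_dim[simp]: "dim_row (poly_mat_eval p M) = dim_row M" "dim_col (poly_mat_eval p M) = dim_col M"
  unfolding poly_mat_eval_def by auto

lemma pme_index:
  assumes "i < dim_row M" "j < dim_col M" "Polynomial.degree p \<le> N"
  shows "poly_mat_eval p M $$ (i,j) = (\<Sum>k\<le>N. poly.coeff p k * (M ^\<^sub>m k) $$ (i,j))"
proof -
  have "poly_mat_eval p M $$ (i,j) = (\<Sum>k\<le>Polynomial.degree p. poly.coeff p k * (M ^\<^sub>m k) $$ (i,j))"
    unfolding poly_mat_eval_def using assms by simp
  also have "\<dots> = (\<Sum>k\<le>N. poly.coeff p k * (M ^\<^sub>m k) $$ (i,j))"
    by (rule sum.mono_neutral_left) (use assms in \<open>auto simp: coeff_eq_0\<close>)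
  finally show ?thesis .
qed

lemma pme_zero_iff:
  assumes "Polynomial.degree p \<le> N"
  shows "poly_mat_eval p M = 0\<^sub>m (dim_row M) (dim_col M) \<longleftrightarrow>
    (\<forall>i<dim_row M. \<forall>j<dim_col M. (\<Sum>k\<le>N. poly.coeff p k * (M ^\<^sub>m k) $$ (i,j)) = 0)"
proof
  assume "poly_mat_eval p M = 0\<^sub>m (dim_row M) (dim_col M)"
  then show "\<forall>i<dim_row M. \<forall>j<dim_col M. (\<Sum>k\<le>N. poly.coeff p k * (M ^\<^sub>m k) $$ (i,j)) = 0"
    using pme_index[OF _ _ assms] by (metis index_zero_mat(1))
next
  assume "\<forall>i<dim_row M. \<forall>j<dim_col M. (\<Sum>k\<le>N. poly.coeff p k * (M ^\<^sub>m k) $$ (i,j)) = 0"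
  then show "poly_mat_eval p M = 0\<^sub>m (dim_row M) (dim_col M)"
    using pme_index[OF _ _ assms] by (intro eq_matI) auto
qed

lemma minimal_poly_le:
  fixes M :: "'a::field mat"
  assumes r0: "r \<noteq> 0" and rM: "poly_mat_eval r M = 0\<^sub>m (dim_row M) (dim_col M)"
  shows "Polynomial.degree (minimal_poly M) \<le> Polynomial.degree r"
proof -
  define Pr where "Pr = (\<lambda>p. monic p \<and> poly_mat_eval p M = 0\<^sub>m (dim_row M) (dim_col M) \<and>
      (\<forall>r. r \<noteq> 0 \<longrightarrow> poly_mat_eval r M = 0\<^sub>m (dim_row M) (dim_col M) \<longrightarrow> Polynomial.degree p \<le> Polynomial.degree r))"
  define Ann where "Ann = (\<lambda>r. r \<noteq> 0 \<and> poly_mat_eval r M = 0\<^sub>m (dim_row M) (dim_col M))"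
  have ex: "\<exists>d r. Ann r \<and> Polynomial.degree r = d" using r0 rM unfolding Ann_def by blast
  define d where "d = (LEAST d. \<exists>r. Ann r \<and> Polynomial.degree r = d)"
  obtain r1 where r1: "Ann r1" "Polynomial.degree r1 = d"
    using LeastI_ex[OF ex] unfolding d_def by blast
  have dle: "d \<le> Polynomial.degree r" if "Ann r" for r
    unfolding d_def using that by (intro Least_le) blast
  define p1 where "p1 = Polynomial.smult (inverse (Polynomial.lead_coeff r1)) r1"
  have lc: "Polynomial.lead_coeff r1 \<noteq> 0" using r1(1) unfolding Ann_def by (metis leading_coeff_0_iff)
  have p1deg: "Polynomial.degree p1 = d" unfolding p1_def using lc r1 by simp
  have "monic p1" unfolding p1_def using lc by simp
  moreover have "poly_mat_eval p1 M = 0\<^sub>m (dim_row M) (dim_col M)"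
  proof -
    have "\<forall>i<dim_row M. \<forall>j<dim_col M. (\<Sum>k\<le>d. poly.coeff r1 k * (M ^\<^sub>m k) $$ (i,j)) = 0"
      using r1 unfolding Ann_def using pme_zero_iff[of r1 d M] by simp
    then have "\<forall>i<dim_row M. \<forall>j<dim_col M. (\<Sum>k\<le>d. poly.coeff p1 k * (M ^\<^sub>m k) $$ (i,j)) = 0"
      unfolding p1_def by (simp add: mult.assoc flip: sum_distrib_left)
    then show ?thesis using pme_zero_iff[of p1 d M] p1deg by simp
  qed
  moreover have "\<forall>r. r \<noteq> 0 \<longrightarrow> poly_mat_eval r M = 0\<^sub>m (dim_row M) (dim_col M) \<longrightarrow> Polynomial.degree p1 \<le> Polynomial.degree r"
    using dle p1deg unfolding Ann_def by auto
  ultimately have Pp1: "Pr p1" unfolding Pr_def by blast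
  have uniq: "q = p1" if Pq: "Pr q" for q
  proof (rule ccontr)
    assume ne: "q \<noteq> p1"
    have q0: "q \<noteq> 0" and p10: "p1 \<noteq> 0" using Pq Pp1 unfolding Pr_def by auto
    have degeq: "Polynomial.degree q = Polynomial.degree p1"
      using Pq Pp1 q0 p10 unfolding Pr_def by (meson le_antisym)
    define e where "e = q - p1"
    have e0: "e \<noteq> 0" using ne unfolding e_def by simp
    let ?D = "Polynomial.degree q"
    have edeg: "Polynomial.degree e \<le> ?D" unfolding e_def using degeq
      by (metis degree_diff_le order_refl)
    have "poly.coeff e ?D = 0" unfolding e_def using Pq Pp1 degeq unfolding Pr_def by simp
    then have "Polynomial.degree e \<noteq> ?D" using e0 by (metis leading_coeff_0_iff)
    with edeg have lt: "Polynomial.degree e < ?D" by simp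
    have "poly_mat_eval e M = 0\<^sub>m (dim_row M) (dim_col M)"
    proof -
      have A: "\<forall>i<dim_row M. \<forall>j<dim_col M. (\<Sum>k\<le>?D. poly.coeff q k * (M ^\<^sub>m k) $$ (i,j)) = 0"
        using Pq pme_zero_iff[of q ?D M] unfolding Pr_def by simp
      have B: "\<forall>i<dim_row M. \<forall>j<dim_col M. (\<Sum>k\<le>?D. poly.coeff p1 k * (M ^\<^sub>m k) $$ (i,j)) = 0"
        using Pp1 pme_zero_iff[of p1 ?D M] degeq unfolding Pr_def by simp
      have "\<forall>i<dim_row M. \<forall>j<dim_col M. (\<Sum>k\<le>?D. poly.coeff e k * (M ^\<^sub>m k) $$ (i,j)) = 0"
        using A B unfolding e_def by (simp add: algebra_simps sum_subtractf)
      then show ?thesis using pme_zero_iff[of e ?D M] edeg by simp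
    qed
    then have "Polynomial.degree q \<le> Polynomial.degree e" using Pq e0 unfolding Pr_def by blast
    with lt show False by simp
  qed
  have "\<exists>!p. Pr p" using Pp1 uniq by blast
  then have "Pr (THE p. Pr p)" by (rule theI')
  moreover have "minimal_poly M = (THE p. Pr p)" unfolding minimal_poly_def Pr_def ..
  ultimately show ?thesis using r0 rM unfolding Pr_def by auto
qed


interpretation to_ac_hom: field_hom "to_ac :: 'a::field \<Rightarrow> 'a alg_closure"
  by unfold_locales simp_all

lemma pme_map:
  fixes M :: "'a::field mat"
  assumes M: "M \<in> carrier_mat N N"
  shows "poly_mat_eval (map_poly to_ac r) (map_mat to_ac M) = map_mat to_ac (poly_mat_eval r M)"
proof (rule eq_matI)
  fix i j assume ij: "i < dim_row (map_mat to_ac (poly_mat_eval r M))" "j < dim_col (map_mat to_ac (poly_mat_eval r M))"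
  then have i: "i < N" and j: "j < N" using M by auto
  have pw: "map_mat to_ac M ^\<^sub>m k = map_mat to_ac (M ^\<^sub>m k)" for k
    using to_ac_hom.mat_hom_pow[OF M] by simp
  have pwc: "M ^\<^sub>m k \<in> carrier_mat N N" for k using M by simp
  show "poly_mat_eval (map_poly to_ac r) (map_mat to_ac M) $$ (i, j) = map_mat to_ac (poly_mat_eval r M) $$ (i, j)"
    using i j M pwc unfolding poly_mat_eval_def pw by (simp add: to_ac_sum)
qed auto

lemma diag_pow:
  fixes D :: "'a::comm_ring_1 mat"
  assumes D: "D \<in> carrier_mat N N" and dg: "diagonal_mat D"
  shows "D ^\<^sub>m k = mat N N (\<lambda>(i,j). if i = j then D $$ (i,i) ^ k else 0)"
proof (induction k)
  case 0
  then show ?case using D by (intro eq_matI) auto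
next
  case (Suc k)
  have "D ^\<^sub>m Suc k = D ^\<^sub>m k * D" by simp
  also have "\<dots> = mat N N (\<lambda>(i,j). if i = j then D $$ (i,i) ^ Suc k else 0)"
  proof (rule eq_matI)
    fix i j assume ij: "i < dim_row (mat N N (\<lambda>(i,j). if i = j then D $$ (i,i) ^ Suc k else (0::'a)))"
      "j < dim_col (mat N N (\<lambda>(i,j). if i = j then D $$ (i,i) ^ Suc k else (0::'a)))"
    then have i: "i < N" and j: "j < N" by auto
    have "(D ^\<^sub>m k * D) $$ (i,j) = (\<Sum>l<N. (if i = l then D $$ (i,i) ^ k else 0) * D $$ (l,j))"
      using i j D unfolding Suc.IH by (simp add: scalar_prod_def atLeast0LessThan)
    also have "\<dots> = (\<Sum>l<N. if l = i then D $$ (i,i) ^ k * D $$ (i,j) else 0)"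
      by (rule sum.cong) auto
    also have "\<dots> = D $$ (i,i) ^ k * D $$ (i,j)"
      using i by simp
    also have "\<dots> = (if i = j then D $$ (i,i) ^ Suc k else 0)"
      using dg i j D unfolding diagonal_mat_def by (auto simp: mult.commute)
    finally show "(D ^\<^sub>m k * D) $$ (i,j) = mat N N (\<lambda>(i,j). if i = j then D $$ (i,i) ^ Suc k else 0) $$ (i,j)"
      using i j by simp
  qed (use D in auto)
  finally show ?case .
qed

lemma mult_diag_entry:
  assumes P: "P \<in> carrier_mat N N" and Q: "Q \<in> carrier_mat N N" and i: "i < N" and j: "j < N"
  shows "(P * mat N N (\<lambda>(i,j). if i = j then x i else 0) * Q) $$ (i,j) = (\<Sum>a<N. P $$ (i,a) * x a * Q $$ (a,j))"
proof -
  have "(P * mat N N (\<lambda>(i,j). if i = j then x i else 0)) = mat N N (\<lambda>(i,a). P $$ (i,a) * x a)"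
  proof (rule eq_matI)
    fix i a assume "i < dim_row (mat N N (\<lambda>(i,a). P $$ (i,a) * x a))" "a < dim_col (mat N N (\<lambda>(i,a). P $$ (i,a) * x a))"
    then have i: "i < N" and a: "a < N" by auto
    have "(P * mat N N (\<lambda>(i,j). if i = j then x i else 0)) $$ (i,a) = (\<Sum>l<N. P $$ (i,l) * (if l = a then x l else 0))"
      using i a P by (simp add: scalar_prod_def atLeast0LessThan)
    also have "\<dots> = P $$ (i,a) * x a" using a by (simp add: if_distrib cong: if_cong)
    finally show "(P * mat N N (\<lambda>(i,j). if i = j then x i else 0)) $$ (i,a) = mat N N (\<lambda>(i,a). P $$ (i,a) * x a) $$ (i,a)"
      using i a by simp
  qed (use P in auto)
  then show ?thesis using P Q i j by (simp add: scalar_prod_def atLeast0LessThan)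
qed

interpretation to_ac_poly: map_poly_inj_idom_hom "to_ac :: 'a::field \<Rightarrow> 'a alg_closure" ..

lemma sim_diag_ann:
  fixes A :: "'b::field mat"
  assumes sw: "similar_mat_wit A D P Q" and dg: "diagonal_mat D" and A: "A \<in> carrier_mat N N"
    and roots: "\<And>a. a < N \<Longrightarrow> poly r (D $$ (a,a)) = 0"
  shows "poly_mat_eval r A = 0\<^sub>m N N"
proof -
  have dA: "dim_row A = N" using A by auto
  have D: "D \<in> carrier_mat N N" and P: "P \<in> carrier_mat N N" and Q: "Q \<in> carrier_mat N N"
    using sw dA unfolding similar_mat_wit_def Let_def by auto
  have pw: "A ^\<^sub>m k = P * mat N N (\<lambda>(i,j). if i = j then D $$ (i,i) ^ k else 0) * Q" for k
    using similar_mat_wit_pow_id[OF sw, of k] diag_pow[OF D dg, of k] by simp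
  have "\<forall>i<N. \<forall>j<N. (\<Sum>k\<le>Polynomial.degree r. poly.coeff r k * (A ^\<^sub>m k) $$ (i,j)) = 0"
  proof (intro allI impI)
    fix i j assume i: "i < N" and j: "j < N"
    have "(\<Sum>k\<le>Polynomial.degree r. poly.coeff r k * (A ^\<^sub>m k) $$ (i,j))
      = (\<Sum>k\<le>Polynomial.degree r. poly.coeff r k * (\<Sum>a<N. P $$ (i,a) * D $$ (a,a) ^ k * Q $$ (a,j)))"
      unfolding pw using mult_diag_entry[OF P Q i j] by simp
    also have "\<dots> = (\<Sum>a<N. P $$ (i,a) * Q $$ (a,j) * (\<Sum>k\<le>Polynomial.degree r. poly.coeff r k * D $$ (a,a) ^ k))"
      by (simp add: sum_distrib_left sum_distrib_right mult_ac) (rule sum.swap)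
    also have "\<dots> = (\<Sum>a<N. P $$ (i,a) * Q $$ (a,j) * poly r (D $$ (a,a)))"
      by (simp add: poly_altdef)
    also have "\<dots> = 0" using roots by simp
    finally show "(\<Sum>k\<le>Polynomial.degree r. poly.coeff r k * (A ^\<^sub>m k) $$ (i,j)) = 0" .
  qed
  then show ?thesis using pme_zero_iff[of r "Polynomial.degree r" A] dA A by auto
qed

lemma ss_cyc_sep:
  fixes M :: "'a::field mat"
  assumes M: "M \<in> carrier_mat N N" and ss: "semisimple_mat M" and cyc: "cyclic_mat M"
  shows "separable_mat M"
proof (rule ccontr)
  assume "\<not> separable_mat M"
  then obtain g where g2: "g^2 dvd char_poly M" and gnu: "\<not> is_unit g"
    unfolding separable_mat_def squarefree_def by blast
  define f where "f = char_poly M"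
  obtain h where fgh: "f = g^2 * h" using g2 unfolding f_def by (elim dvdE)
  have fdeg: "Polynomial.degree f = N" and fc: "poly.coeff f N = 1"
    using degree_monic_char_poly[OF M] unfolding f_def by auto
  have f0: "f \<noteq> 0" using fc by auto
  have g0: "g \<noteq> 0" and h0: "h \<noteq> 0" using f0 fgh by auto
  have gdeg: "Polynomial.degree g > 0" using g0 gnu is_unit_iff_degree by blast
  define r where "r = g * h"
  have r0: "r \<noteq> 0" using g0 h0 unfolding r_def by simp
  have "Polynomial.degree f = 2 * Polynomial.degree g + Polynomial.degree h"
    unfolding fgh using g0 h0 by (simp add: degree_mult_eq degree_power_eq)
  moreover have "Polynomial.degree r = Polynomial.degree g + Polynomial.degree h"
    unfolding r_def using g0 h0 by (simp add: degree_mult_eq)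
  ultimately have rdeg: "Polynomial.degree r < Polynomial.degree f" using gdeg by linarith
  define M' where "M' = map_mat to_ac M"
  have M': "M' \<in> carrier_mat N N" using M unfolding M'_def by auto
  obtain D where dg: "diagonal_mat D" and sim: "similar_mat M' D"
    using ss unfolding semisimple_mat_def M'_def by blast
  then obtain P Q where sw: "similar_mat_wit M' D P Q" unfolding similar_mat_def by blast
  have D: "D \<in> carrier_mat N N" using sw M' unfolding similar_mat_wit_def Let_def by auto
  have "char_poly M' = map_poly to_ac f" unfolding M'_def f_def by (rule to_ac_hom.char_poly_hom[OF M])
  also have "char_poly M' = char_poly D" by (rule char_poly_similar[OF sim])
  also have "char_poly D = (\<Prod>a\<leftarrow>diag_mat D. [:- a, 1:])"
    by (rule char_poly_upper_triangular[OF D]) (use dg D in \<open>auto simp: upper_triangular_def diagonal_mat_def\<close>)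
  finally have cpD: "(\<Prod>a\<leftarrow>diag_mat D. [:- a, 1:]) = map_poly to_ac f" .
  have roots: "poly (map_poly to_ac r) (D $$ (a,a)) = 0" if a: "a < N" for a
  proof -
    have mem: "D $$ (a,a) \<in> set (diag_mat D)" using a D unfolding diag_mat_def by auto
    have "poly (\<Prod>a\<leftarrow>diag_mat D. [:- a, 1:]) (D $$ (a,a)) = 0"
      unfolding poly_prod_list prod_list_zero_iff using mem by force
    then have "poly (map_poly to_ac f) (D $$ (a,a)) = 0" using cpD by simp
    then have "poly (map_poly to_ac g) (D $$ (a,a)) = 0 \<or> poly (map_poly to_ac h) (D $$ (a,a)) = 0"
      unfolding fgh by (simp add: to_ac_poly.hom_mult to_ac_poly.hom_power)
    then show ?thesis unfolding r_def by (auto simp: to_ac_poly.hom_mult)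
  qed
  have "poly_mat_eval (map_poly to_ac r) M' = 0\<^sub>m N N"
    by (rule sim_diag_ann[OF sw dg M' roots])
  then have mz: "map_mat to_ac (poly_mat_eval r M) = 0\<^sub>m N N"
    unfolding M'_def pme_map[OF M] .
  have "poly_mat_eval r M = 0\<^sub>m (dim_row M) (dim_col M)"
  proof (rule eq_matI)
    fix i j assume ij: "i < dim_row (0\<^sub>m (dim_row M) (dim_col M) :: 'a mat)" "j < dim_col (0\<^sub>m (dim_row M) (dim_col M) :: 'a mat)"
    then have "map_mat to_ac (poly_mat_eval r M) $$ (i,j) = (0\<^sub>m N N :: 'a alg_closure mat) $$ (i,j)"
      using mz by simp
    then show "poly_mat_eval r M $$ (i,j) = 0\<^sub>m (dim_row M) (dim_col M) $$ (i,j)" using ij M by simp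
  qed (use M in auto)
  from minimal_poly_le[OF r0 this] have "Polynomial.degree (minimal_poly M) \<le> Polynomial.degree r" .
  with cyc rdeg show False unfolding cyclic_mat_def f_def by simp
qed

lemma distinct_eig_diag:
  fixes A :: "'b::field mat"
  assumes A: "A \<in> carrier_mat N N" and len: "length L = N" and dist: "distinct L"
    and ev: "\<And>j. j < N \<Longrightarrow> eigenvector A (V j) (L ! j)"
  shows "\<exists>D. diagonal_mat D \<and> similar_mat A D"
proof -
  have dA: "dim_row A = N" using A by auto
  have Vc: "V j \<in> carrier_vec N" if "j < N" for j using ev[OF that] dA unfolding eigenvector_def by auto
  have ev_entry: "(\<Sum>l<N. A $$ (i,l) * V j $ l) = L ! j * V j $ i" if j: "j < N" and i: "i < N" for i j
  proof -
    have "(A *\<^sub>v V j) $ i = (L ! j \<cdot>\<^sub>v V j) $ i" using ev[OF j] unfolding eigenvector_def by simp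
    then show ?thesis using A Vc[OF j] i by (simp add: scalar_prod_def atLeast0LessThan)
  qed
  have nz: "\<exists>i<N. V j $ i \<noteq> 0" if j: "j < N" for j
  proof (rule ccontr)
    assume "\<not> (\<exists>i<N. V j $ i \<noteq> 0)"
    then have "V j = 0\<^sub>v N" using Vc[OF j] by (intro eq_vecI) auto
    then show False using ev[OF j] dA unfolding eigenvector_def by auto
  qed
  have indep: "m \<le> N \<Longrightarrow> (\<forall>i<N. (\<Sum>j<m. V j $ i * w j) = 0) \<Longrightarrow> (\<forall>j<m. w j = 0)" for m w
  proof (induction m arbitrary: w)
    case 0
    then show ?case by simp
  next
    case (Suc m)
    have mN: "m < N" using Suc.prems by simp
    have H: "(\<Sum>j<Suc m. V j $ i * w j) = 0" if "i < N" for i using Suc.prems that by blast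
    have H2: "(\<Sum>j<Suc m. V j $ i * (w j * L ! j)) = 0" if i: "i < N" for i
    proof -
      have "(\<Sum>j<Suc m. V j $ i * (w j * L ! j)) = (\<Sum>j<Suc m. w j * (L ! j * V j $ i))"
        by (simp add: mult_ac)
      also have "\<dots> = (\<Sum>j<Suc m. w j * (\<Sum>l<N. A $$ (i,l) * V j $ l))"
        using ev_entry i Suc.prems by (intro sum.cong) auto
      also have "\<dots> = (\<Sum>j<Suc m. \<Sum>l<N. A $$ (i,l) * (V j $ l * w j))"
        by (simp only: sum_distrib_left) (simp only: mult_ac)
      also have "\<dots> = (\<Sum>l<N. \<Sum>j<Suc m. A $$ (i,l) * (V j $ l * w j))"
        by (rule sum.swap)
      also have "\<dots> = (\<Sum>l<N. A $$ (i,l) * (\<Sum>j<Suc m. V j $ l * w j))"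
        by (simp only: sum_distrib_left)
      also have "\<dots> = 0" using H by simp
      finally show ?thesis .
    qed
    define w' where "w' = (\<lambda>j. w j * (L ! j - L ! m))"
    have "\<forall>i<N. (\<Sum>j<m. V j $ i * w' j) = 0"
    proof (intro allI impI)
      fix i assume i: "i < N"
      have "(\<Sum>j<m. V j $ i * w' j) = (\<Sum>j<Suc m. V j $ i * (w j * (L ! j - L ! m)))"
        unfolding w'_def by simp
      also have "\<dots> = (\<Sum>j<Suc m. V j $ i * (w j * L ! j)) - L ! m * (\<Sum>j<Suc m. V j $ i * w j)"
        by (simp add: algebra_simps sum_subtractf sum_distrib_left)
      also have "\<dots> = 0" using H[OF i] H2[OF i] by simp
      finally show "(\<Sum>j<m. V j $ i * w' j) = 0" .
    qed
    then have w'0: "\<forall>j<m. w' j = 0" using Suc.IH mN by simp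
    have wlt: "w j = 0" if j: "j < m" for j
    proof -
      have "L ! j \<noteq> L ! m" using dist j mN len by (simp add: nth_eq_iff_index_eq)
      then show ?thesis using w'0 j unfolding w'_def by auto
    qed
    have "V m $ i * w m = 0" if i: "i < N" for i
    proof -
      have "(\<Sum>j<Suc m. V j $ i * w j) = V m $ i * w m" using wlt by simp
      then show ?thesis using H[OF i] by simp
    qed
    then have "w m = 0" using nz[OF mN] by auto
    then show ?case using wlt less_Suc_eq by auto
  qed
  define P where "P = mat N N (\<lambda>(i,j). V j $ i)"
  have P: "P \<in> carrier_mat N N" unfolding P_def by simp
  have "det P \<noteq> 0"
  proof
    assume "det P = 0"
    then obtain w where w: "w \<in> carrier_vec N" "w \<noteq> 0\<^sub>v N" "P *\<^sub>v w = 0\<^sub>v N"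
      using det_0_iff_vec_prod_zero[OF P] by blast
    have "\<forall>i<N. (\<Sum>j<N. V j $ i * w $ j) = 0"
    proof (intro allI impI)
      fix i assume i: "i < N"
      have "(P *\<^sub>v w) $ i = 0" using w(3) i by simp
      then show "(\<Sum>j<N. V j $ i * w $ j) = 0" using i w(1) unfolding P_def
        by (simp add: scalar_prod_def atLeast0LessThan)
    qed
    then have "\<forall>j<N. w $ j = 0" using indep[of N "\<lambda>j. w $ j"] by simp
    then have "w = 0\<^sub>v N" using w(1) by (intro eq_vecI) auto
    with w(2) show False by simp
  qed
  from det_non_zero_imp_unit[OF P this]
  obtain Q where Q: "Q \<in> carrier_mat N N" and QP: "Q * P = 1\<^sub>m N" and PQ: "P * Q = 1\<^sub>m N"
    unfolding Units_def ring_mat_def by auto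
  define D where "D = mat N N (\<lambda>(i,j). if i = j then L ! i else (0::'b))"
  have D: "D \<in> carrier_mat N N" unfolding D_def by simp
  have dg: "diagonal_mat D" unfolding D_def diagonal_mat_def by auto
  have AP: "A * P = P * D"
  proof (rule eq_matI)
    fix i j assume ij: "i < dim_row (P * D)" "j < dim_col (P * D)"
    then have i: "i < N" and j: "j < N" using P D by auto
    have "(A * P) $$ (i,j) = (\<Sum>l<N. A $$ (i,l) * V j $ l)"
      using A P i j unfolding P_def by (simp add: scalar_prod_def atLeast0LessThan)
    also have "\<dots> = L ! j * V j $ i" using ev_entry[OF j i] .
    also have "\<dots> = (\<Sum>l<N. V l $ i * (if l = j then L ! l else 0))"
      using j by (simp add: if_distrib mult.commute cong: if_cong)
    also have "\<dots> = (P * D) $$ (i,j)"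
      using P D i j unfolding P_def D_def by (simp add: scalar_prod_def atLeast0LessThan)
    finally show "(A * P) $$ (i,j) = (P * D) $$ (i,j)" .
  qed (use A P D in auto)
  have "A = A * (P * Q)" using A PQ by simp
  also have "\<dots> = (A * P) * Q" using A P Q by (simp add: assoc_mult_mat)
  also have "\<dots> = P * D * Q" unfolding AP ..
  finally have "A = P * D * Q" .
  then have "similar_mat_wit A D P Q"
    unfolding similar_mat_wit_def Let_def using A P Q D PQ QP dA by auto
  then show ?thesis using dg unfolding similar_mat_def by blast
qed

lemma sep_ss:
  fixes M :: "'a::{finite,field} mat"
  assumes M: "M \<in> carrier_mat N N" and sep: "separable_mat M"
  shows "semisimple_mat M"
proof -
  define f where "f = char_poly M"
  have fc: "poly.coeff f N = 1" and fdeg: "Polynomial.degree f = N"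
    using degree_monic_char_poly[OF M] unfolding f_def by auto
  have f0: "f \<noteq> 0" using fc by auto
  obtain u v where uv: "u * f + v * pderiv f = 1"
    using sqf_bezout[OF _ f0] sep unfolding separable_mat_def f_def by blast
  define M' where "M' = map_mat to_ac M"
  have M': "M' \<in> carrier_mat N N" using M unfolding M'_def by auto
  define F where "F = map_poly to_ac f"
  have FM: "char_poly M' = F" unfolding M'_def F_def f_def by (rule to_ac_hom.char_poly_hom[OF M])
  have UV: "map_poly to_ac u * F + map_poly to_ac v * pderiv F = 1"
  proof -
    have "map_poly to_ac (u * f + v * pderiv f) = map_poly to_ac 1" using uv by simp
    then show ?thesis unfolding F_def
      by (simp add: to_ac_poly.hom_add to_ac_poly.hom_mult to_ac_hom.map_poly_pderiv)
  qed
  have F0: "F \<noteq> 0" using f0 unfolding F_def by simp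
  have Fdeg: "Polynomial.degree F = N" using fdeg unfolding F_def by simp
  have Flc: "Polynomial.lead_coeff F = 1" using fc fdeg unfolding F_def by simp
  obtain A where A: "size A = N" "F = (\<Prod>x\<in>#A. [:-x, 1:])"
    using alg_closed_imp_factorization[OF F0] Fdeg Flc by auto
  have cnt: "count A c \<le> 1" for c
  proof (rule ccontr)
    assume "\<not> count A c \<le> 1"
    then have "count A c \<ge> 2" by simp
    then have "0 < count A c" by linarith
    then have "c \<in># A" by simp
    then obtain B where B: "A = add_mset c B" by (metis mset_add)
    have "count B c \<ge> 1" using \<open>count A c \<ge> 2\<close> B by simp
    then have "0 < count B c" by linarith
    then have "c \<in># B" by simp
    then obtain C where C: "B = add_mset c C" by (metis mset_add)
    define q where "q = [:-c, 1:]"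
    define k where "k = (\<Prod>x\<in>#C. [:-x, 1:])"
    have Fq: "F = q * (q * k)" unfolding A(2) B C q_def k_def by simp
    have pq: "poly q c = 0" unfolding q_def by simp
    have "poly F c = 0" unfolding Fq using pq by simp
    moreover have "poly (pderiv F) c = 0" unfolding Fq pderiv_mult using pq by simp
    ultimately have "poly (map_poly to_ac u * F + map_poly to_ac v * pderiv F) c = 0" by simp
    then show False using UV by simp
  qed
  obtain L where L: "mset L = A" using ex_mset by blast
  have len: "length L = N" using A(1) L by (metis size_mset)
  have dist: "distinct L"
    unfolding distinct_count_atmost_1
  proof
    fix a
    show "count (mset L) a = (if a \<in> set L then 1 else 0)"
    proof (cases "a \<in> set L")
      case True
      then have "0 < count (mset L) a" by simp
      moreover have "count (mset L) a \<le> 1" using cnt[of a] L by simp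
      ultimately have "count (mset L) a = 1" by linarith
      then show ?thesis using True by simp
    next
      case False
      then show ?thesis by (simp add: count_mset_0_iff)
    qed
  qed
  have root: "poly F (L ! j) = 0" if j: "j < N" for j
  proof -
    have "L ! j \<in># A" using j len L by (metis nth_mem set_mset_mset)
    then obtain B where B: "A = add_mset (L ! j) B" by (metis mset_add)
    show ?thesis unfolding A(2) B by simp
  qed
  have "\<forall>j. \<exists>w. j < N \<longrightarrow> eigenvector M' w (L ! j)"
  proof (intro allI)
    fix j
    show "\<exists>w. j < N \<longrightarrow> eigenvector M' w (L ! j)"
    proof (cases "j < N")
      case True
      then have "eigenvalue M' (L ! j)" using eigenvalue_root_char_poly[OF M'] root FM by simp
      then show ?thesis unfolding eigenvalue_def by blast
    qed simp
  qed
  then obtain V where V: "\<And>j. j < N \<Longrightarrow> eigenvector M' (V j) (L ! j)" by metis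
  from distinct_eig_diag[OF M' len dist V] show ?thesis
    unfolding semisimple_mat_def M'_def by blast
qed

theorem theorem5p11:
  fixes n :: nat
  defines "sA \<equiv> proportion (A_group n :: ('a::{finite,field}) mat set) separable_mat"
    and "cA \<equiv> proportion (A_group n :: 'a mat set) cyclic_mat"
    and "ssA \<equiv> proportion (A_group n :: 'a mat set) semisimple_mat"
  shows "sA \<le> ssA \<and> ssA \<le> sA + (1 - cA)"
proof -
  define S where "S = (A_group n :: 'a mat set)"
  have Sc: "x \<in> carrier_mat (n+1) (n+1)" if "x \<in> S" for x using that unfolding S_def A_group_def by auto
  define s where "s = card {x \<in> S. separable_mat x}"
  define c where "c = card {x \<in> S. cyclic_mat x}"
  define ss where "ss = card {x \<in> S. semisimple_mat x}"
  have props: "sA = real s / real (card S)" "cA = real c / real (card S)" "ssA = real ss / real (card S)"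
    unfolding sA_def cA_def ssA_def proportion_def s_def c_def ss_def S_def by simp_all
  show ?thesis
  proof (cases "card S = 0")
    case True
    then show ?thesis unfolding props by simp
  next
    case False
    then have fin: "finite S" by (meson card.infinite)
    have sub1: "{x \<in> S. separable_mat x} \<subseteq> {x \<in> S. semisimple_mat x}"
      using sep_ss Sc by blast
    have le1: "s \<le> ss" unfolding s_def ss_def by (rule card_mono) (use fin sub1 in auto)
    have sub2: "{x \<in> S. semisimple_mat x} \<subseteq> {x \<in> S. separable_mat x} \<union> {x \<in> S. \<not> cyclic_mat x}"
      using ss_cyc_sep Sc by blast
    have "ss \<le> card ({x \<in> S. separable_mat x} \<union> {x \<in> S. \<not> cyclic_mat x})"
      unfolding ss_def by (rule card_mono) (use fin sub2 in auto)
    also have "\<dots> \<le> s + card {x \<in> S. \<not> cyclic_mat x}" unfolding s_def by (rule card_Un_le)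
    finally have le2: "ss \<le> s + card {x \<in> S. \<not> cyclic_mat x}" .
    have "card S = card ({x \<in> S. cyclic_mat x} \<union> {x \<in> S. \<not> cyclic_mat x})"
      by (rule arg_cong[where f = card]) auto
    also have "\<dots> = c + card {x \<in> S. \<not> cyclic_mat x}"
      unfolding c_def by (rule card_Un_disjoint) (use fin in auto)
    finally have cS: "card S = c + card {x \<in> S. \<not> cyclic_mat x}" .
    have pos: "real (card S) > 0" using False by simp
    have "real ss \<le> real s + (real (card S) - real c)" using le2 cS by linarith
    then have "real ss / real (card S) \<le> real s / real (card S) + (1 - real c / real (card S))"
      using pos by (simp add: field_simps)
    moreover have "real s / real (card S) \<le> real ss / real (card S)"
      using le1 pos by (simp add: divide_right_mono)
    ultimately show ?thesis unfolding props by simp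
  qed
qed

end
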